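(* Let $A\in\mathbb{R}^{m\times m}$ be positive definite, $B\in\mathbb{R}^{m\times n}$ ($n\le m$), $\alpha\ge0$, $\beta>0$, and let $(\lambda,(u^*,v^* )^* )$ be an eigenpair of $\mathcal{P}_{MGSSP}^{-1}\mathcal{A}$ with $u\in\mathbb{C}^m$, $v\in\mathbb{C}^n$. (i) If $B$ has full column rank and $B^Tu=0$, then $$\frac{\lambda_{\min}(H)(\alpha+2\lambda_{\min}(H))}{(\alpha+2\rho(H))^2+4\rho(S)^2}\le \operatorname{Re}(\lambda)\le\frac{\rho(H)(\alpha+2\rho(H))+2\rho(S)^2}{(\alpha+2\lambda_{\min}(H))^2},\qquad |\operatorname{Im}(\lambda)|\le\frac{\alpha\rho(S)}{(\alpha+2\lambda_{\min}(H))^2}.\quad(\ast)$$ (ii) If $B$ is rank deficient and $u=0$, then $\lambda=0$. (iii) If $B$ is rank deficient and $B^Tu=0$, then either $\lambda=0$ or $\lambda$ satisfies the inequalities $(\ast)$.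
   Context: A real square matrix $A$ is called positive definite if $x^TAx>0$ for all nonzero $x\in\mathbb{R}^m$ ($A$ need not be symmetric). $H=\frac12(A+A^T)$, $S=\frac12(A-A^T)$. $\mathcal{A}=\begin{pmatrix}A & B\\ -B^T & 0\end{pmatrix}$ and, for $\alpha\ge0,\beta>0$, $\mathcal{P}_{MGSSP}=\begin{pmatrix}\alpha I+2A & 2B\\ -2B^T & \beta I\end{pmatrix}$. $\lambda_{\min}(\cdot)$ is the smallest eigenvalue of a symmetric matrix and $\rho(\cdot)$ the spectral radius. *)

theory Defs
  imports "Jordan_Normal_Form.Spectral_Radius" "Jordan_Normal_Form.Gauss_Jordan_Elimination"
    "Jordan_Normal_Form.DL_Rank"
begin

text \<open>Positive definite in the (not necessarily symmetric) sense: x^T A x > 0 for all nonzero real x.\<close>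
definition pos_def_real :: "nat \<Rightarrow> real mat \<Rightarrow> bool" where
  "pos_def_real m A \<longleftrightarrow> A \<in> carrier_mat m m \<and>
     (\<forall>x \<in> carrier_vec m. x \<noteq> 0\<^sub>v m \<longrightarrow> x \<bullet> (A *\<^sub>v x) > 0)"

definition sym_part :: "real mat \<Rightarrow> real mat" where
  "sym_part A = (1/2) \<cdot>\<^sub>m (A + transpose_mat A)"

definition skew_part :: "real mat \<Rightarrow> real mat" where
  "skew_part A = (1/2) \<cdot>\<^sub>m (A - transpose_mat A)"

definition lambda_min :: "real mat \<Rightarrow> real" where
  "lambda_min H = Min {k. eigenvalue H k}"

definition rho :: "real mat \<Rightarrow> real" where
  "rho M = spectral_radius (map_mat complex_of_real M)"

definition saddle_mat :: "real mat \<Rightarrow> real mat \<Rightarrow> real mat" where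
  "saddle_mat A B = four_block_mat A B (- transpose_mat B) (0\<^sub>m (dim_col B) (dim_col B))"

definition P_MGSSP :: "real \<Rightarrow> real \<Rightarrow> real mat \<Rightarrow> real mat \<Rightarrow> real mat" where
  "P_MGSSP \<alpha> \<beta> A B = four_block_mat (\<alpha> \<cdot>\<^sub>m 1\<^sub>m (dim_row A) + 2 \<cdot>\<^sub>m A) (2 \<cdot>\<^sub>m B)
      (- (2 \<cdot>\<^sub>m transpose_mat B)) (\<beta> \<cdot>\<^sub>m 1\<^sub>m (dim_col B))"

definition eig_bounds :: "real mat \<Rightarrow> real \<Rightarrow> complex \<Rightarrow> bool" where
  "eig_bounds A \<alpha> lam \<longleftrightarrow>
     (let H = sym_part A; S = skew_part A; lm = lambda_min H; rH = rho H; rS = rho S in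
       lm * (\<alpha> + 2 * lm) / ((\<alpha> + 2 * rH)^2 + 4 * rS^2) \<le> Re lam \<and>
       Re lam \<le> (rH * (\<alpha> + 2 * rH) + 2 * rS^2) / (\<alpha> + 2 * lm)^2 \<and>
       \<bar>Im lam\<bar> \<le> \<alpha> * rS / (\<alpha> + 2 * lm)^2)"

end

theory Submission imports Defs "HOL-Analysis.Function_Topology" "HOL-Analysis.Convex" begin

lemma quad_min_exists:
  fixes H :: "nat \<Rightarrow> nat \<Rightarrow> real" and m :: nat
  assumes "m > 0"
  defines "f \<equiv> \<lambda>z::nat\<Rightarrow>real. (\<Sum>i<m. \<Sum>j<m. z i * H i j * z j)"
  shows "\<exists>z. (\<forall>i\<ge>m. z i = 0) \<and> (\<Sum>i<m. (z i)^2) = 1 \<and>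
     (\<forall>y. (\<forall>i\<ge>m. y i = 0) \<and> (\<Sum>i<m. (y i)^2) = 1 \<longrightarrow> f z \<le> f y)"
proof -
  define K where "K = {z::nat\<Rightarrow>real. (\<forall>i\<ge>m. z i = 0) \<and> (\<Sum>i<m. (z i)^2) = 1}"
  define S where "S = (\<lambda>i::nat. if i < m then {-1..1::real} else {0})"
  have cT: "compact (PiE UNIV S)"
  proof -
    have "compactin (product_topology (\<lambda>_. euclideanreal) UNIV) (PiE UNIV S)"
      unfolding compactin_PiE by (auto simp: S_def)
    then show ?thesis by (simp add: euclidean_product_topology)
  qed
  have cl: "closed {z::nat\<Rightarrow>real. (\<Sum>i<m. (z i)^2) = 1}"
    by (intro closed_Collect_eq continuous_intros continuous_on_product_then_coordinatewise continuous_on_id)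
  have KT: "K = PiE UNIV S \<inter> {z::nat\<Rightarrow>real. (\<Sum>i<m. (z i)^2) = 1}"
  proof (rule subset_antisym; rule subsetI)
    fix z assume z: "z \<in> K"
    have "z \<in> PiE UNIV S"
    proof (auto simp: PiE_def S_def)
      fix i assume i: "i < m"
      have "(z i)^2 \<le> (\<Sum>i<m. (z i)^2)"
        using i by (intro member_le_sum) auto
      then have "(z i)^2 \<le> 1" using z by (simp add: K_def)
      then show "- 1 \<le> z i" "z i \<le> 1" using abs_square_le_1[of "z i"] by auto
    next
      fix i assume "\<not> i < m" then show "z i = 0" using z by (auto simp: K_def)
    qed
    then show "z \<in> PiE UNIV S \<inter> {z::nat\<Rightarrow>real. (\<Sum>i<m. (z i)^2) = 1}" using z by (auto simp: K_def)
  next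
    fix z assume "z \<in> PiE UNIV S \<inter> {z::nat\<Rightarrow>real. (\<Sum>i<m. (z i)^2) = 1}"
    then show "z \<in> K" by (auto simp: K_def PiE_def S_def Pi_def split: if_splits) (meson not_less)
  qed
  have cK: "compact K" unfolding KT using cT cl by auto
  have neK: "K \<noteq> {}"
  proof -
    have "(\<Sum>i<m. (if i = 0 then 1 else 0::real)^2) = (\<Sum>i<m. if i = 0 then 1 else 0)"
      by (rule sum.cong) auto
    also have "\<dots> = 1" using assms(1) by simp
    finally have "(\<lambda>i. if i = 0 then 1 else 0::real) \<in> K" using assms(1) by (auto simp: K_def)
    then show ?thesis by auto
  qed
  have cf: "continuous_on K f" unfolding f_def
    by (intro continuous_intros continuous_on_product_then_coordinatewise continuous_on_id)
  from continuous_attains_inf[OF cK neK cf] show ?thesis unfolding K_def by blast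
qed

lemma quad_zero_lin:
  fixes a b :: real
  assumes "\<And>t. 0 \<le> a * t + b * t^2"
  shows "a = 0"
proof (rule ccontr)
  assume a: "a \<noteq> 0"
  define c where "c = \<bar>b\<bar> + 1"
  have c: "c > 0" "b \<le> c - 1" by (auto simp: c_def)
  define t where "t = - a / c"
  have "a * t + b * t^2 = (-(a^2)) / c + b * a^2 / c^2" by (simp add: t_def power2_eq_square)
  also have "\<dots> \<le> (-(a^2)) / c + (c - 1) * a^2 / c^2"
    using c by (intro add_left_mono divide_right_mono mult_right_mono) auto
  also have "\<dots> = (-(a^2)) / c^2" using c by (simp add: field_simps power2_eq_square)
  also have "\<dots> < 0" using a c by simp
  finally show False using assms[of t] by simp
qed

lemma sum_delta_mult:
  fixes X :: "nat \<Rightarrow> real"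
  assumes "i < m"
  shows "(\<Sum>a<m. (if a = i then 1 else 0) * X a) = X i"
    "(\<Sum>a<m. X a * (if a = i then 1 else 0)) = X i"
proof -
  have "(\<Sum>a<m. (if a = i then 1 else 0) * X a) = (\<Sum>a<m. if a = i then X a else 0)"
    by (rule sum.cong) auto
  then show "(\<Sum>a<m. (if a = i then 1 else 0) * X a) = X i" using assms by simp
  have "(\<Sum>a<m. X a * (if a = i then 1 else 0)) = (\<Sum>a<m. if a = i then X a else 0)"
    by (rule sum.cong) auto
  then show "(\<Sum>a<m. X a * (if a = i then 1 else 0)) = X i" using assms by simp
qed

lemma quad_expand:
  fixes H :: "nat \<Rightarrow> nat \<Rightarrow> real" and z :: "nat \<Rightarrow> real"
  assumes i: "i < m" and sym: "\<And>a b. a < m \<Longrightarrow> b < m \<Longrightarrow> H a b = H b a"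
  shows "(\<Sum>a<m. \<Sum>b<m. (z a + t * (if a = i then 1 else 0)) * H a b * (z b + t * (if b = i then 1 else 0)))
     = (\<Sum>a<m. \<Sum>b<m. z a * H a b * z b) + 2 * t * (\<Sum>b<m. H i b * z b) + t^2 * H i i"
proof -
  define d where "d = (\<lambda>a::nat. if a = i then 1 else 0::real)"
  have e1: "(\<Sum>a<m. \<Sum>b<m. (z a + t * d a) * H a b * (z b + t * d b)) =
    (\<Sum>a<m. \<Sum>b<m. z a * H a b * z b) + t*(\<Sum>a<m. \<Sum>b<m. d a * H a b * z b)
     + t*(\<Sum>a<m. \<Sum>b<m. z a * H a b * d b) + t^2 * (\<Sum>a<m. \<Sum>b<m. d a * H a b * d b)"
    by (simp add: algebra_simps sum.distrib sum_distrib_left power2_eq_square)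
  have e2: "(\<Sum>a<m. \<Sum>b<m. d a * H a b * z b) = (\<Sum>b<m. H i b * z b)"
  proof -
    have "(\<Sum>a<m. \<Sum>b<m. d a * H a b * z b) = (\<Sum>a<m. d a * (\<Sum>b<m. H a b * z b))"
      by (simp add: sum_distrib_left mult.assoc)
    then show ?thesis using sum_delta_mult[OF i] unfolding d_def by simp
  qed
  have e3: "(\<Sum>a<m. \<Sum>b<m. z a * H a b * d b) = (\<Sum>b<m. H i b * z b)"
  proof -
    have "(\<Sum>a<m. \<Sum>b<m. z a * H a b * d b) = (\<Sum>a<m. z a * H a i)"
      using sum_delta_mult(2)[OF i] unfolding d_def by (simp add: mult.assoc sum_distrib_left[symmetric])
    also have "\<dots> = (\<Sum>b<m. H i b * z b)"
      using i sym by (intro sum.cong) auto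
    finally show ?thesis .
  qed
  have e4: "(\<Sum>a<m. \<Sum>b<m. d a * H a b * d b) = H i i"
  proof -
    have "(\<Sum>a<m. \<Sum>b<m. d a * H a b * d b) = (\<Sum>a<m. d a * H a i)"
      using sum_delta_mult(2)[OF i] unfolding d_def by (simp add: mult.assoc sum_distrib_left[symmetric])
    then show ?thesis using sum_delta_mult(1)[OF i] unfolding d_def by simp
  qed
  show ?thesis using e1 e2 e3 e4 unfolding d_def by simp
qed

lemma sq_expand:
  fixes z :: "nat \<Rightarrow> real"
  assumes i: "i < m"
  shows "(\<Sum>a<m. (z a + t * (if a = i then 1 else 0))^2) = (\<Sum>a<m. (z a)^2) + 2 * t * z i + t^2"
proof -
  have "(\<Sum>a<m. (z a + t * (if a = i then 1 else 0))^2) =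
     (\<Sum>a<m. (z a)^2 + (2 * t * (if a = i then z a else 0) + (if a = i then t^2 else 0)))"
    by (intro sum.cong) (auto simp: power2_eq_square algebra_simps)
  also have "\<dots> = (\<Sum>a<m. (z a)^2) + 2 * t * z i + t^2"
    using i by (simp add: sum.distrib sum_distrib_left[symmetric])
  finally show ?thesis .
qed


lemma quad_scale:
  fixes H :: "nat \<Rightarrow> nat \<Rightarrow> real" and y :: "nat \<Rightarrow> real"
  shows "(\<Sum>a<m. \<Sum>b<m. (y a / c) * H a b * (y b / c)) = (\<Sum>a<m. \<Sum>b<m. y a * H a b * y b) / c^2"
  by (simp add: sum_divide_distrib power2_eq_square algebra_simps)

lemma sym_min_fun:
  fixes H :: "nat \<Rightarrow> nat \<Rightarrow> real" and m :: nat
  assumes m: "m > 0" and sym: "\<And>a b. a < m \<Longrightarrow> b < m \<Longrightarrow> H a b = H b a"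
  shows "\<exists>\<mu> z. (\<forall>i\<ge>m. z i = 0) \<and> (\<Sum>i<m. (z i)^2) = 1 \<and>
     (\<forall>i<m. (\<Sum>j<m. H i j * z j) = \<mu> * z i) \<and>
     (\<forall>y. \<mu> * (\<Sum>i<m. (y i)^2) \<le> (\<Sum>a<m. \<Sum>b<m. y a * H a b * y b))"
proof -
  define f where "f = (\<lambda>z::nat\<Rightarrow>real. (\<Sum>i<m. \<Sum>j<m. z i * H i j * z j))"
  obtain z where z0: "\<forall>i\<ge>m. z i = 0" and z1: "(\<Sum>i<m. (z i)^2) = 1"
    and zmin: "\<And>y. (\<forall>i\<ge>m. y i = 0) \<Longrightarrow> (\<Sum>i<m. (y i)^2) = 1 \<Longrightarrow> f z \<le> f y"
    using quad_min_exists[OF m, of H] unfolding f_def by blast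
  define \<mu> where "\<mu> = f z"
  have bound: "\<mu> * (\<Sum>i<m. (y i)^2) \<le> f y" for y
  proof -
    define s where "s = (\<Sum>i<m. (y i)^2)"
    show ?thesis
    proof (cases "s = 0")
      case True
      then have "\<forall>i<m. y i = 0" unfolding s_def by (simp add: sum_nonneg_eq_0_iff)
      then have "f y = 0" unfolding f_def by simp
      then show ?thesis using True s_def by simp
    next
      case False
      have s0: "s > 0" using False unfolding s_def by (metis less_eq_real_def sum_nonneg zero_le_power2)
      define c where "c = sqrt s"
      have c0: "c > 0" and c2: "c^2 = s" using s0 by (auto simp: c_def)
      define w where "w = (\<lambda>i. if i < m then y i / c else 0)"
      have w0: "\<forall>i\<ge>m. w i = 0" by (auto simp: w_def)
      have "(\<Sum>i<m. (w i)^2) = (\<Sum>i<m. (y i)^2 / c^2)"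
        by (intro sum.cong) (auto simp: w_def power_divide)
      also have "\<dots> = 1" using c2 s0 by (simp add: sum_divide_distrib[symmetric] s_def)
      finally have w1: "(\<Sum>i<m. (w i)^2) = 1" .
      have "f w = (\<Sum>a<m. \<Sum>b<m. (y a / c) * H a b * (y b / c))"
        unfolding f_def by (intro sum.cong) (auto simp: w_def)
      also have "\<dots> = f y / s" using quad_scale c2 unfolding f_def by simp
      finally have "\<mu> \<le> f y / s" using zmin[OF w0 w1] \<mu>_def by simp
      then show ?thesis using s0 unfolding s_def by (simp add: field_simps)
    qed
  qed
  have eig: "(\<Sum>j<m. H i j * z j) = \<mu> * z i" if i: "i < m" for i
  proof -
    define a where "a = 2 * ((\<Sum>j<m. H i j * z j) - \<mu> * z i)"
    define b where "b = H i i - \<mu>"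
    have "0 \<le> a * t + b * t^2" for t
    proof -
      define y where "y = (\<lambda>k. z k + t * (if k = i then 1 else 0))"
      have "\<mu> * (\<Sum>k<m. (y k)^2) \<le> f y" by (rule bound)
      also have "f y = f z + 2 * t * (\<Sum>b<m. H i b * z b) + t^2 * H i i"
        unfolding f_def y_def by (rule quad_expand[OF i sym])
      also have "(\<Sum>k<m. (y k)^2) = 1 + 2 * t * z i + t^2"
        unfolding y_def using sq_expand[OF i, of z t] z1 by simp
      finally show ?thesis unfolding a_def b_def \<mu>_def by (simp add: algebra_simps)
    qed
    then have "a = 0" by (rule quad_zero_lin)
    then show ?thesis unfolding a_def by simp
  qed
  show ?thesis
    using z0 z1 eig bound unfolding f_def by blast
qed


lemma rank_full_kernel:
  fixes B :: "real mat"
  assumes B: "B \<in> carrier_mat m n" and r: "vec_space.rank m B = n"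
    and w: "w \<in> carrier_vec n" and Bw: "B *\<^sub>v w = 0\<^sub>v m"
  shows "w = 0\<^sub>v n"
proof (rule ccontr)
  assume w0: "w \<noteq> 0\<^sub>v n"
  interpret vec_space "TYPE(real)" m .
  show False
  proof (cases "distinct (cols B)")
    case True
    have "lin_indpt (set (cols B))" using full_rank_lin_indpt[OF B r True] .
    moreover have "lin_dep (set (cols B))" using lin_depI[OF B w w0 Bw True] .
    ultimately show False by simp
  next
    case False
    obtain S where S: "maximal S (\<lambda>T. T \<subseteq> set (cols B) \<and> lin_indpt T)"
      using maximal_exists[of "(\<lambda>T. T \<subseteq> set (cols B) \<and> lin_indpt T)" "card (set (cols B))" "{}"]
      by (meson List.finite_set card_mono empty_iff empty_subsetI finite_lin_indpt2 rev_finite_subset)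
    then have "card S \<le> card (set (cols B))" by (simp add: card_mono maximal_def)
    then have "card S < n"
      using B cols_length card_length False card_distinct carrier_matD(2) nat_less_le
      by (metis dual_order.antisym dual_order.trans)
    then show False using rank_card_indpt[OF B S] r by simp
  qed
qed

definition rq :: "nat \<Rightarrow> real mat \<Rightarrow> (nat \<Rightarrow> real) \<Rightarrow> real" where
  "rq m M x = (\<Sum>a<m. \<Sum>b<m. x a * M $$ (a,b) * x b)"

lemma scalar_rq:
  assumes "M \<in> carrier_mat m m" "x \<in> carrier_vec m"
  shows "x \<bullet> (M *\<^sub>v x) = rq m M (\<lambda>i. x $ i)"
  using assms unfolding rq_def scalar_prod_def mult_mat_vec_def
  by (auto simp: sum_distrib_left algebra_simps intro!: sum.cong)

lemma pd_fun:
  assumes pd: "pos_def_real m A" and x: "\<exists>i<m. x i \<noteq> 0"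
  shows "rq m A x > 0"
proof -
  have A: "A \<in> carrier_mat m m" and P: "\<And>y. y \<in> carrier_vec m \<Longrightarrow> y \<noteq> 0\<^sub>v m \<Longrightarrow> y \<bullet> (A *\<^sub>v y) > 0"
    using pd unfolding pos_def_real_def by auto
  have v: "vec m x \<in> carrier_vec m" by simp
  have "vec m x \<noteq> 0\<^sub>v m" using x by (metis index_vec index_zero_vec(1))
  from P[OF v this] have "rq m A (\<lambda>i. vec m x $ i) > 0" using scalar_rq[OF A v] by simp
  moreover have "rq m A (\<lambda>i. vec m x $ i) = rq m A x" unfolding rq_def by (intro sum.cong) auto
  ultimately show ?thesis by simp
qed

lemma pd_nonneg:
  assumes pd: "pos_def_real m A"
  shows "rq m A x \<ge> 0"
  using pd_fun[OF pd, of x] unfolding rq_def by (cases "\<exists>i<m. x i \<noteq> 0") auto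

lemma cq_Re_Im:
  fixes M :: "real mat" and u :: "nat \<Rightarrow> complex"
  shows "(\<Sum>i<m. cnj (u i) * (\<Sum>j<m. complex_of_real (M $$ (i,j)) * u j)) =
     Complex (rq m M (\<lambda>i. Re (u i)) + rq m M (\<lambda>i. Im (u i)))
       (\<Sum>a<m. \<Sum>b<m. M $$ (a,b) * (Re (u a) * Im (u b) - Im (u a) * Re (u b)))"
  by (simp add: complex_eq_iff Re_sum Im_sum rq_def sum_distrib_left algebra_simps sum.distrib sum_subtractf)

lemma cross_sum:
  fixes B :: "real mat" and p :: "nat \<Rightarrow> complex" and q :: "nat \<Rightarrow> complex"
  shows "(\<Sum>i<m. cnj (p i) * (\<Sum>k<n. complex_of_real (B $$ (i,k)) * q k)) =
    (\<Sum>k<n. q k * cnj (\<Sum>i<m. complex_of_real (B $$ (i,k)) * p i))"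
  by (simp add: sum_distrib_left sum_distrib_right algebra_simps cnj_sum sum.swap[of _ "{..<m}"])


lemma sym_part_index:
  assumes "A \<in> carrier_mat m m" "i < m" "j < m"
  shows "sym_part A $$ (i,j) = (A $$ (i,j) + A $$ (j,i)) / 2"
  using assms by (simp add: sym_part_def)

lemma skew_part_index:
  assumes "A \<in> carrier_mat m m" "i < m" "j < m"
  shows "skew_part A $$ (i,j) = (A $$ (i,j) - A $$ (j,i)) / 2"
  using assms by (simp add: skew_part_def)

lemma rq_sym_part:
  assumes A: "A \<in> carrier_mat m m"
  shows "rq m (sym_part A) x = rq m A x"
proof -
  have "rq m (sym_part A) x = (\<Sum>a<m. \<Sum>b<m. (x a * A $$ (a,b) * x b + x a * A $$ (b,a) * x b) / 2)"
    unfolding rq_def using A by (intro sum.cong refl) (simp add: sym_part_index field_simps)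
  also have "\<dots> = ((\<Sum>a<m. \<Sum>b<m. x a * A $$ (a,b) * x b) + (\<Sum>a<m. \<Sum>b<m. x a * A $$ (b,a) * x b)) / 2"
    by (simp only: add_divide_distrib sum.distrib sum_divide_distrib)
  also have "(\<Sum>a<m. \<Sum>b<m. x a * A $$ (b,a) * x b) = (\<Sum>a<m. \<Sum>b<m. x a * A $$ (a,b) * x b)"
    by (subst sum.swap) (simp add: mult.commute mult.left_commute)
  finally show ?thesis unfolding rq_def by simp
qed

lemma eigvec_of_fun:
  fixes H :: "'a::comm_ring_1 mat"
  assumes H: "H \<in> carrier_mat m m" and nz: "\<exists>i<m. z i \<noteq> 0"
    and eq: "\<And>i. i < m \<Longrightarrow> (\<Sum>j<m. H $$ (i,j) * z j) = \<mu> * z i"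
  shows "eigenvalue H \<mu>"
proof -
  have "eigenvector H (vec m z) \<mu>"
    unfolding eigenvector_def
  proof (intro conjI)
    show "vec m z \<in> carrier_vec (dim_row H)" using H by simp
    show "vec m z \<noteq> 0\<^sub>v (dim_row H)" using H nz by (metis carrier_matD(1) index_vec index_zero_vec(1))
    show "H *\<^sub>v vec m z = \<mu> \<cdot>\<^sub>v vec m z"
    proof (rule eq_vecI)
      fix i assume "i < dim_vec (\<mu> \<cdot>\<^sub>v vec m z)"
      then have i: "i < m" by simp
      have "(H *\<^sub>v vec m z) $ i = (\<Sum>j<m. H $$ (i,j) * z j)"
        using H i by (auto simp: mult_mat_vec_def scalar_prod_def atLeast0LessThan intro!: sum.cong)
      then show "(H *\<^sub>v vec m z) $ i = (\<mu> \<cdot>\<^sub>v vec m z) $ i" using eq[OF i] i by simp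
    qed (use H in simp)
  qed
  then show ?thesis unfolding eigenvalue_def by blast
qed

lemma sum_sq_nz: "(\<Sum>i<m. (z i)^2) = (1::real) \<Longrightarrow> \<exists>i<m. z i \<noteq> 0"
  by (metis (no_types, lifting) power_zero_numeral sum.neutral lessThan_iff zero_neq_one)

lemma lm_props:
  assumes pd: "pos_def_real m A" and m: "m > 0"
  shows "lambda_min (sym_part A) > 0"
    "\<And>x. lambda_min (sym_part A) * (\<Sum>i<m. (x i)^2) \<le> rq m A x"
    "\<And>x. rq m A x \<le> rho (sym_part A) * (\<Sum>i<m. (x i)^2)"
proof -
  have A: "A \<in> carrier_mat m m" using pd unfolding pos_def_real_def by auto
  define H where "H = sym_part A"
  have H: "H \<in> carrier_mat m m" using A by (simp add: H_def sym_part_def)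
  have Hsym: "\<And>a b. a < m \<Longrightarrow> b < m \<Longrightarrow> H $$ (a,b) = H $$ (b,a)"
    using A by (simp add: H_def sym_part_index)
  obtain \<mu> z where z1: "(\<Sum>i<m. (z i)^2) = 1"
     and zeig: "\<forall>i<m. (\<Sum>j<m. H $$ (i,j) * z j) = \<mu> * z i"
     and zb: "\<forall>y. \<mu> * (\<Sum>i<m. (y i)^2) \<le> (\<Sum>a<m. \<Sum>b<m. y a * H $$ (a,b) * y b)"
    using sym_min_fun[OF m, of "\<lambda>a b. H $$ (a,b)"] Hsym by blast
  have ev\<mu>: "eigenvalue H \<mu>" using eigvec_of_fun[OF H sum_sq_nz[OF z1]] zeig by blast
  define SP where "SP = {k. eigenvalue H k}"
  have finSP: "finite SP" using card_finite_spectrum(1)[OF H] unfolding SP_def spectrum_def by simp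
  have "\<mu> \<in> SP" using ev\<mu> SP_def by simp
  then have lm_le: "lambda_min H \<le> \<mu>" and lm_in: "lambda_min H \<in> SP"
    unfolding lambda_min_def SP_def[symmetric] using finSP by (auto intro: Min_le Min_in)
  show "lambda_min (sym_part A) * (\<Sum>i<m. (x i)^2) \<le> rq m A x" for x
  proof -
    have "lambda_min H * (\<Sum>i<m. (x i)^2) \<le> \<mu> * (\<Sum>i<m. (x i)^2)"
      using lm_le by (intro mult_right_mono sum_nonneg) auto
    also have "\<dots> \<le> rq m H x" using zb unfolding rq_def by auto
    finally show ?thesis unfolding H_def rq_sym_part[OF A] .
  qed
  show "lambda_min (sym_part A) > 0"
  proof -
    obtain w where w: "eigenvector H w (lambda_min H)"
      using lm_in unfolding SP_def eigenvalue_def by auto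
    have wc: "w \<in> carrier_vec m" and w0: "w \<noteq> 0\<^sub>v m" and Hw: "H *\<^sub>v w = lambda_min H \<cdot>\<^sub>v w"
      using w H unfolding eigenvector_def by auto
    have "\<exists>i<m. w $ i \<noteq> 0" using wc w0 by (metis carrier_vecD eq_vecI index_zero_vec(1) index_zero_vec(2))
    then have pos: "rq m A (\<lambda>i. w $ i) > 0" by (rule pd_fun[OF pd])
    have "rq m A (\<lambda>i. w $ i) = w \<bullet> (H *\<^sub>v w)" using scalar_rq[OF H wc] rq_sym_part[OF A] H_def by simp
    also have "\<dots> = lambda_min H * (w \<bullet> w)" using Hw wc by simp
    finally have eq: "rq m A (\<lambda>i. w $ i) = lambda_min H * (w \<bullet> w)" .
    have "w \<bullet> w \<ge> 0" using wc by (simp add: scalar_prod_def sum_nonneg)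
    then show ?thesis using pos eq H_def by (metis mult_nonpos_nonneg not_less)
  qed
  obtain \<mu>2 z2 where z21: "(\<Sum>i<m. (z2 i)^2) = 1"
     and z2eig: "\<forall>i<m. (\<Sum>j<m. - H $$ (i,j) * z2 j) = \<mu>2 * z2 i"
     and z2b: "\<forall>y. \<mu>2 * (\<Sum>i<m. (y i)^2) \<le> (\<Sum>a<m. \<Sum>b<m. y a * (- H $$ (a,b)) * y b)"
    using sym_min_fun[OF m, of "\<lambda>a b. - H $$ (a,b)"] Hsym by force
  define Hc where "Hc = map_mat complex_of_real H"
  have Hc: "Hc \<in> carrier_mat m m" using H by (simp add: Hc_def)
  have "eigenvalue Hc (complex_of_real (- \<mu>2))"
  proof (rule eigvec_of_fun[OF Hc, of "\<lambda>i. complex_of_real (z2 i)"])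
    show "\<exists>i<m. complex_of_real (z2 i) \<noteq> 0" using sum_sq_nz[OF z21] by simp
    fix i assume i: "i < m"
    have "(\<Sum>j<m. Hc $$ (i,j) * complex_of_real (z2 j)) = complex_of_real (\<Sum>j<m. H $$ (i,j) * z2 j)"
      using i H by (simp add: Hc_def)
    also have "(\<Sum>j<m. H $$ (i,j) * z2 j) = - \<mu>2 * z2 i"
      using z2eig i by (simp add: sum_negf) (metis minus_equation_iff)
    finally show "(\<Sum>j<m. Hc $$ (i,j) * complex_of_real (z2 j)) = complex_of_real (- \<mu>2) * complex_of_real (z2 i)"
      by simp
  qed
  then have "norm (complex_of_real (- \<mu>2)) \<le> spectral_radius Hc"
    using spectral_radius_mem_max(2)[OF Hc m] unfolding spectrum_def by blast
  then have r2: "- \<mu>2 \<le> rho H" unfolding rho_def Hc_def by simp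
  show "rq m A x \<le> rho (sym_part A) * (\<Sum>i<m. (x i)^2)" for x
  proof -
    have "rq m A x = rq m H x" using rq_sym_part[OF A] H_def by simp
    also have "\<dots> = - (\<Sum>a<m. \<Sum>b<m. x a * (- H $$ (a,b)) * x b)"
      unfolding rq_def by (simp add: sum_negf)
    also have "\<dots> \<le> - \<mu>2 * (\<Sum>i<m. (x i)^2)" using z2b by (simp add: minus_le_iff)
    also have "\<dots> \<le> rho H * (\<Sum>i<m. (x i)^2)" using r2 by (intro mult_right_mono sum_nonneg) auto
    finally show ?thesis unfolding H_def .
  qed
qed


lemma gram_quad:
  fixes S :: "nat \<Rightarrow> nat \<Rightarrow> real"
  shows "(\<Sum>a<m. \<Sum>b<m. y a * (\<Sum>k<m. S k a * S k b) * y b) = (\<Sum>k<m. (\<Sum>b<m. S k b * y b)^2)"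
proof -
  have "(\<Sum>a<m. \<Sum>b<m. y a * (\<Sum>k<m. S k a * S k b) * y b) = (\<Sum>a<m. \<Sum>b<m. \<Sum>k<m. (S k a * y a) * (S k b * y b))"
  proof (intro sum.cong refl)
    fix a b
    show "y a * (\<Sum>k<m. S k a * S k b) * y b = (\<Sum>k<m. (S k a * y a) * (S k b * y b))"
      by (simp add: sum_distrib_left sum_distrib_right mult_ac)
  qed
  also have "\<dots> = (\<Sum>a<m. \<Sum>k<m. \<Sum>b<m. (S k a * y a) * (S k b * y b))"
    by (rule sum.cong[OF refl], rule sum.swap)
  also have "\<dots> = (\<Sum>k<m. \<Sum>a<m. \<Sum>b<m. (S k a * y a) * (S k b * y b))"
    by (rule sum.swap)
  also have "\<dots> = (\<Sum>k<m. (\<Sum>b<m. S k b * y b)^2)"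
    by (simp only: power2_eq_square sum_product)
  finally show ?thesis .
qed

lemma skew_bound:
  assumes A: "A \<in> carrier_mat m m" and m: "m > 0"
  shows "\<bar>\<Sum>a<m. \<Sum>b<m. A $$ (a,b) * (x a * y b - y a * x b)\<bar>
           \<le> rho (skew_part A) * ((\<Sum>i<m. (x i)^2) + (\<Sum>i<m. (y i)^2))"
proof -
  define S where "S = skew_part A"
  have Sc: "S \<in> carrier_mat m m" unfolding S_def skew_part_def
    using A by (intro smult_carrier_mat minus_carrier_mat transpose_carrier_mat) auto
  have Sidx: "\<And>a b. a < m \<Longrightarrow> b < m \<Longrightarrow> S $$ (a,b) = (A $$ (a,b) - A $$ (b,a)) / 2"
    using A by (simp add: S_def skew_part_index)
  have Sskew: "\<And>a b. a < m \<Longrightarrow> b < m \<Longrightarrow> S $$ (b,a) = - S $$ (a,b)"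
    by (simp add: Sidx divide_simps)
  define T where "T = (\<Sum>a<m. \<Sum>b<m. A $$ (a,b) * (x a * y b - y a * x b))"
  have T: "T = 2 * (\<Sum>a<m. x a * (\<Sum>b<m. S $$ (a,b) * y b))"
  proof -
    have "T = (\<Sum>a<m. \<Sum>b<m. A $$ (a,b) * x a * y b) - (\<Sum>a<m. \<Sum>b<m. A $$ (a,b) * y a * x b)"
      unfolding T_def by (simp add: sum_subtractf[symmetric] algebra_simps)
    also have "(\<Sum>a<m. \<Sum>b<m. A $$ (a,b) * y a * x b) = (\<Sum>a<m. \<Sum>b<m. A $$ (b,a) * x a * y b)"
      by (subst sum.swap) (simp add: mult.commute mult.left_commute)
    also have "(\<Sum>a<m. \<Sum>b<m. A $$ (a,b) * x a * y b) - (\<Sum>a<m. \<Sum>b<m. A $$ (b,a) * x a * y b)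
       = (\<Sum>a<m. \<Sum>b<m. 2 * (x a * (S $$ (a,b) * y b)))"
    proof -
      have "(\<Sum>a<m. \<Sum>b<m. A $$ (a,b) * x a * y b) - (\<Sum>a<m. \<Sum>b<m. A $$ (b,a) * x a * y b)
         = (\<Sum>a<m. \<Sum>b<m. A $$ (a,b) * x a * y b - A $$ (b,a) * x a * y b)"
        by (simp add: sum_subtractf)
      also have "\<dots> = (\<Sum>a<m. \<Sum>b<m. 2 * (x a * (S $$ (a,b) * y b)))"
        by (intro sum.cong refl) (simp add: Sidx algebra_simps)
      finally show ?thesis .
    qed
    also have "\<dots> = 2 * (\<Sum>a<m. x a * (\<Sum>b<m. S $$ (a,b) * y b))"
      by (simp add: sum_distrib_left)
    finally show ?thesis .
  qed
  define G where "G = (\<lambda>a b. \<Sum>k<m. S $$ (k,a) * S $$ (k,b))"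
  have Gsym: "\<And>a b. a < m \<Longrightarrow> b < m \<Longrightarrow> - G a b = - G b a"
    unfolding G_def by (simp add: mult.commute)
  obtain \<mu> z where z1: "(\<Sum>i<m. (z i)^2) = 1"
     and zeig: "\<forall>i<m. (\<Sum>j<m. - G i j * z j) = \<mu> * z i"
     and zb: "\<forall>y. \<mu> * (\<Sum>i<m. (y i)^2) \<le> (\<Sum>a<m. \<Sum>b<m. y a * (- G a b) * y b)"
    using sym_min_fun[OF m, of "\<lambda>a b. - G a b"] Gsym by blast
  define s2 where "s2 = - \<mu>"
  have Gy: "(\<Sum>k<m. (\<Sum>b<m. S $$ (k,b) * y b)^2) \<le> s2 * (\<Sum>i<m. (y i)^2)" for y
  proof -
    have e1: "(\<Sum>a<m. \<Sum>b<m. y a * (- G a b) * y b) = - (\<Sum>a<m. \<Sum>b<m. y a * G a b * y b)"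
      by (simp add: sum_negf)
    have e2: "(\<Sum>a<m. \<Sum>b<m. y a * G a b * y b) = (\<Sum>k<m. (\<Sum>b<m. S $$ (k,b) * y b)^2)"
      unfolding G_def by (rule gram_quad)
    have "\<mu> * (\<Sum>i<m. (y i)^2) \<le> (\<Sum>a<m. \<Sum>b<m. y a * (- G a b) * y b)" using zb by blast
    then show ?thesis using e1 e2 unfolding s2_def by linarith
  qed
  have s2nn: "s2 \<ge> 0"
  proof -
    have "0 \<le> (\<Sum>k<m. (\<Sum>b<m. S $$ (k,b) * z b)^2)" by (intro sum_nonneg) auto
    also have "\<dots> \<le> s2 * (\<Sum>i<m. (z i)^2)" by (rule Gy)
    finally show ?thesis using z1 by simp
  qed
  define s where "s = sqrt s2"
  have s: "s \<ge> 0" "s * s = s2" using s2nn by (auto simp: s_def)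
  define yv where "yv = (\<lambda>k. \<Sum>j<m. S $$ (k,j) * z j)"
  have SSz: "(\<Sum>k<m. S $$ (i,k) * yv k) = - s2 * z i" if i: "i < m" for i
  proof -
    have "(\<Sum>k<m. S $$ (i,k) * yv k) = (\<Sum>k<m. \<Sum>j<m. S $$ (i,k) * (S $$ (k,j) * z j))"
      unfolding yv_def by (simp add: sum_distrib_left)
    also have "\<dots> = (\<Sum>j<m. \<Sum>k<m. S $$ (i,k) * (S $$ (k,j) * z j))"
      by (rule sum.swap)
    also have "\<dots> = (\<Sum>j<m. (\<Sum>k<m. S $$ (i,k) * S $$ (k,j)) * z j)"
      by (simp add: sum_distrib_right mult.assoc)
    also have "\<dots> = (\<Sum>j<m. - G i j * z j)"
    proof (rule sum.cong[OF refl])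
      fix j assume j: "j \<in> {..<m}"
      have "(\<Sum>k<m. S $$ (k,i) * S $$ (k,j)) = (\<Sum>k<m. - (S $$ (i,k) * S $$ (k,j)))"
      proof (rule sum.cong[OF refl])
        fix k assume "k \<in> {..<m}"
        then show "S $$ (k,i) * S $$ (k,j) = - (S $$ (i,k) * S $$ (k,j))" using Sskew[of i k] i by simp
      qed
      then show "(\<Sum>k<m. S $$ (i,k) * S $$ (k,j)) * z j = - G i j * z j"
        unfolding G_def by (simp add: sum_negf)
    qed
    also have "\<dots> = - s2 * z i" using zeig i s2_def by simp
    finally show ?thesis .
  qed
  define Scm where "Scm = map_mat complex_of_real S"
  have Scm: "Scm \<in> carrier_mat m m" using Sc by (simp add: Scm_def)
  have idx: "\<And>i k. i < m \<Longrightarrow> k < m \<Longrightarrow> Scm $$ (i,k) = complex_of_real (S $$ (i,k))"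
    using Sc by (simp add: Scm_def)
  have "s \<le> rho S"
  proof -
    define w where "w = (\<lambda>k. complex_of_real (yv k) - \<i> * complex_of_real s * complex_of_real (z k))"
    have ev: "\<exists>e. eigenvalue Scm e \<and> norm e = s"
    proof (cases "\<exists>i<m. w i \<noteq> 0")
      case True
      have "eigenvalue Scm (- \<i> * complex_of_real s)"
      proof (rule eigvec_of_fun[OF Scm True])
        fix i assume i: "i < m"
        have "(\<Sum>j<m. Scm $$ (i,j) * w j) =
           complex_of_real (\<Sum>j<m. S $$ (i,j) * yv j) - \<i> * complex_of_real s * complex_of_real (\<Sum>j<m. S $$ (i,j) * z j)"
          using i by (simp add: idx w_def algebra_simps sum_subtractf sum_distrib_left)
        also have "\<dots> = - \<i> * complex_of_real s * w i"
          using SSz[OF i] s(2)[symmetric] unfolding w_def yv_def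
          by (simp add: algebra_simps)
        finally show "(\<Sum>j<m. Scm $$ (i,j) * w j) = - \<i> * complex_of_real s * w i" .
      qed
      moreover have "norm (- \<i> * complex_of_real s) = s" using s by (simp add: norm_mult)
      ultimately show ?thesis by blast
    next
      case False
      have "eigenvalue Scm (\<i> * complex_of_real s)"
      proof (rule eigvec_of_fun[OF Scm, of "\<lambda>k. complex_of_real (z k)"])
        show "\<exists>i<m. complex_of_real (z i) \<noteq> 0" using sum_sq_nz[OF z1] by simp
        fix i assume i: "i < m"
        have "(\<Sum>j<m. Scm $$ (i,j) * complex_of_real (z j)) = complex_of_real (yv i)"
          using i by (simp add: idx yv_def)
        also have "\<dots> = \<i> * complex_of_real s * complex_of_real (z i)"
          using False i unfolding w_def by auto
        finally show "(\<Sum>j<m. Scm $$ (i,j) * complex_of_real (z j)) = \<i> * complex_of_real s * complex_of_real (z i)" .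
      qed
      moreover have "norm (\<i> * complex_of_real s) = s" using s by (simp add: norm_mult)
      ultimately show ?thesis by blast
    qed
    then obtain e where "eigenvalue Scm e" "norm e = s" by blast
    then show ?thesis
      using spectral_radius_mem_max(2)[OF Scm m, of s] unfolding spectrum_def rho_def Scm_def by auto
  qed
  define X where "X = (\<Sum>i<m. (x i)^2)"
  define Y where "Y = (\<Sum>i<m. (y i)^2)"
  have X: "X \<ge> 0" and Y: "Y \<ge> 0" by (auto simp: X_def Y_def intro: sum_nonneg)
  have "(\<Sum>a<m. x a * (\<Sum>b<m. S $$ (a,b) * y b))^2 \<le> X * (\<Sum>a<m. (\<Sum>b<m. S $$ (a,b) * y b)^2)"
    unfolding X_def by (rule Cauchy_Schwarz_ineq_sum)
  also have "\<dots> \<le> X * (s2 * Y)" using Gy[of y] X unfolding Y_def by (intro mult_left_mono) auto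
  finally have C: "T^2 \<le> 4 * s2 * X * Y" unfolding T by (simp add: power_mult_distrib algebra_simps)
  have "4 * s2 * X * Y \<le> s2 * (X + Y)^2"
  proof -
    have "0 \<le> s2 * (X - Y)^2" using s2nn by simp
    then show ?thesis by (simp add: power2_eq_square algebra_simps)
  qed
  also have "\<dots> = (s * (X + Y))^2" using s by (simp add: power_mult_distrib power2_eq_square)
  finally have "T^2 \<le> (s * (X + Y))^2" using C by linarith
  then have "\<bar>T\<bar> \<le> \<bar>s * (X + Y)\<bar>" by (simp only: abs_le_square_iff)
  then have "\<bar>T\<bar> \<le> s * (X + Y)" using s X Y by simp
  also have "\<dots> \<le> rho S * (X + Y)" using \<open>s \<le> rho S\<close> X Y by (intro mult_right_mono) auto
  finally show ?thesis unfolding T_def X_def Y_def S_def .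
qed


lemma fb_idx:
  fixes A' :: "'a::comm_ring_1 mat"
  assumes "A' \<in> carrier_mat r1 c1" "B' \<in> carrier_mat r1 c2" "C' \<in> carrier_mat r2 c1" "D' \<in> carrier_mat r2 c2"
    "p \<in> carrier_vec c1" "q \<in> carrier_vec c2"
  shows "i < r1 \<Longrightarrow> (four_block_mat A' B' C' D' *\<^sub>v (p @\<^sub>v q)) $ i = (A' *\<^sub>v p) $ i + (B' *\<^sub>v q) $ i"
    "k < r2 \<Longrightarrow> (four_block_mat A' B' C' D' *\<^sub>v (p @\<^sub>v q)) $ (r1 + k) = (C' *\<^sub>v p) $ k + (D' *\<^sub>v q) $ k"
  using assms by (simp_all add: four_block_mat_mult_vec)

lemma mv_idx:
  assumes "M \<in> carrier_mat r c" "p \<in> carrier_vec c" "i < r"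
  shows "(map_mat complex_of_real M *\<^sub>v p) $ i = (\<Sum>j<c. complex_of_real (M $$ (i,j)) * p $ j)"
  using assms by (auto simp: mult_mat_vec_def scalar_prod_def atLeast0LessThan mult.commute intro!: sum.cong)

lemma sum_delta_c:
  fixes X :: "nat \<Rightarrow> complex"
  assumes "i < m"
  shows "(\<Sum>j<m. complex_of_real (if i = j then c else 0) * X j) = complex_of_real c * X i"
proof -
  have "(\<Sum>j<m. complex_of_real (if i = j then c else 0) * X j) = (\<Sum>j<m. if j = i then complex_of_real c * X j else 0)"
    by (rule sum.cong) auto
  then show ?thesis using assms by simp
qed

lemma comp_P:
  fixes A B :: "real mat"
  assumes A: "A \<in> carrier_mat m m" and B: "B \<in> carrier_mat m n"
    and p: "p \<in> carrier_vec m" and q: "q \<in> carrier_vec n"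
  shows "i < m \<Longrightarrow> (map_mat complex_of_real (P_MGSSP \<alpha> \<beta> A B) *\<^sub>v (p @\<^sub>v q)) $ i =
      complex_of_real \<alpha> * p $ i + 2 * (\<Sum>j<m. complex_of_real (A $$ (i,j)) * p $ j)
      + 2 * (\<Sum>k<n. complex_of_real (B $$ (i,k)) * q $ k)"
   "k < n \<Longrightarrow> (map_mat complex_of_real (P_MGSSP \<alpha> \<beta> A B) *\<^sub>v (p @\<^sub>v q)) $ (m + k) =
      - 2 * (\<Sum>i<m. complex_of_real (B $$ (i,k)) * p $ i) + complex_of_real \<beta> * q $ k"
proof -
  have dr: "dim_row A = m" "dim_col B = n" using A B by auto
  define A1 where "A1 = \<alpha> \<cdot>\<^sub>m 1\<^sub>m m + 2 \<cdot>\<^sub>m A"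
  define B1 where "B1 = 2 \<cdot>\<^sub>m B"
  define C1 where "C1 = - (2 \<cdot>\<^sub>m transpose_mat B)"
  define D1 where "D1 = \<beta> \<cdot>\<^sub>m 1\<^sub>m n"
  have c: "A1 \<in> carrier_mat m m" "B1 \<in> carrier_mat m n" "C1 \<in> carrier_mat n m" "D1 \<in> carrier_mat n n"
    using A B by (auto simp: A1_def B1_def C1_def D1_def)
  have P: "map_mat complex_of_real (P_MGSSP \<alpha> \<beta> A B) = four_block_mat (map_mat complex_of_real A1)
     (map_mat complex_of_real B1) (map_mat complex_of_real C1) (map_mat complex_of_real D1)"
    unfolding P_MGSSP_def dr A1_def[symmetric] B1_def[symmetric] C1_def[symmetric] D1_def[symmetric]
    using c by (rule map_four_block_mat)
  have c': "map_mat complex_of_real A1 \<in> carrier_mat m m" "map_mat complex_of_real B1 \<in> carrier_mat m n"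
     "map_mat complex_of_real C1 \<in> carrier_mat n m" "map_mat complex_of_real D1 \<in> carrier_mat n n"
    using c by auto
  show "i < m \<Longrightarrow> (map_mat complex_of_real (P_MGSSP \<alpha> \<beta> A B) *\<^sub>v (p @\<^sub>v q)) $ i =
      complex_of_real \<alpha> * p $ i + 2 * (\<Sum>j<m. complex_of_real (A $$ (i,j)) * p $ j)
      + 2 * (\<Sum>k<n. complex_of_real (B $$ (i,k)) * q $ k)"
  proof -
    assume i: "i < m"
    have "(map_mat complex_of_real A1 *\<^sub>v p) $ i = (\<Sum>j<m. complex_of_real (A1 $$ (i,j)) * p $ j)"
      using mv_idx[OF c(1) p i] .
    also have "\<dots> = (\<Sum>j<m. complex_of_real (if i = j then \<alpha> else 0) * p $ j + 2 * (complex_of_real (A $$ (i,j)) * p $ j))"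
      using i A by (intro sum.cong refl) (auto simp: A1_def algebra_simps)
    also have "\<dots> = complex_of_real \<alpha> * p $ i + 2 * (\<Sum>j<m. complex_of_real (A $$ (i,j)) * p $ j)"
      using i by (simp add: sum.distrib sum_delta_c sum_distrib_left)
    finally have 1: "(map_mat complex_of_real A1 *\<^sub>v p) $ i = complex_of_real \<alpha> * p $ i + 2 * (\<Sum>j<m. complex_of_real (A $$ (i,j)) * p $ j)" .
    have "(map_mat complex_of_real B1 *\<^sub>v q) $ i = (\<Sum>k<n. complex_of_real (B1 $$ (i,k)) * q $ k)"
      using mv_idx[OF c(2) q i] .
    also have "\<dots> = 2 * (\<Sum>k<n. complex_of_real (B $$ (i,k)) * q $ k)"
      using i B by (simp add: B1_def sum_distrib_left mult.assoc)
    finally have 2: "(map_mat complex_of_real B1 *\<^sub>v q) $ i = 2 * (\<Sum>k<n. complex_of_real (B $$ (i,k)) * q $ k)" .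
    show ?thesis unfolding P fb_idx(1)[OF c' p q i] 1 2 ..
  qed
  show "k < n \<Longrightarrow> (map_mat complex_of_real (P_MGSSP \<alpha> \<beta> A B) *\<^sub>v (p @\<^sub>v q)) $ (m + k) =
      - 2 * (\<Sum>i<m. complex_of_real (B $$ (i,k)) * p $ i) + complex_of_real \<beta> * q $ k"
  proof -
    assume k: "k < n"
    have "(map_mat complex_of_real C1 *\<^sub>v p) $ k = (\<Sum>i<m. complex_of_real (C1 $$ (k,i)) * p $ i)"
      using mv_idx[OF c(3) p k] .
    also have "\<dots> = - 2 * (\<Sum>i<m. complex_of_real (B $$ (i,k)) * p $ i)"
      using k B by (simp add: C1_def sum_distrib_left sum_negf mult.assoc)
    finally have 1: "(map_mat complex_of_real C1 *\<^sub>v p) $ k = - 2 * (\<Sum>i<m. complex_of_real (B $$ (i,k)) * p $ i)" .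
    have "(map_mat complex_of_real D1 *\<^sub>v q) $ k = (\<Sum>j<n. complex_of_real (D1 $$ (k,j)) * q $ j)"
      using mv_idx[OF c(4) q k] .
    also have "\<dots> = (\<Sum>j<n. complex_of_real (if k = j then \<beta> else 0) * q $ j)"
      using k by (intro sum.cong refl) (auto simp: D1_def)
    also have "\<dots> = complex_of_real \<beta> * q $ k" using k by (rule sum_delta_c)
    finally have 2: "(map_mat complex_of_real D1 *\<^sub>v q) $ k = complex_of_real \<beta> * q $ k" .
    show ?thesis unfolding P fb_idx(2)[OF c' p q k] 1 2 ..
  qed
qed

lemma comp_M:
  fixes A B :: "real mat"
  assumes A: "A \<in> carrier_mat m m" and B: "B \<in> carrier_mat m n"
    and p: "p \<in> carrier_vec m" and q: "q \<in> carrier_vec n"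
  shows "i < m \<Longrightarrow> (map_mat complex_of_real (saddle_mat A B) *\<^sub>v (p @\<^sub>v q)) $ i =
      (\<Sum>j<m. complex_of_real (A $$ (i,j)) * p $ j) + (\<Sum>k<n. complex_of_real (B $$ (i,k)) * q $ k)"
   "k < n \<Longrightarrow> (map_mat complex_of_real (saddle_mat A B) *\<^sub>v (p @\<^sub>v q)) $ (m + k) =
      - (\<Sum>i<m. complex_of_real (B $$ (i,k)) * p $ i)"
proof -
  have dr: "dim_col B = n" using B by auto
  define C1 where "C1 = - transpose_mat B"
  define D1 where "D1 = (0\<^sub>m n n :: real mat)"
  have c: "C1 \<in> carrier_mat n m" "D1 \<in> carrier_mat n n"
    using A B by (auto simp: C1_def D1_def)
  have P: "map_mat complex_of_real (saddle_mat A B) = four_block_mat (map_mat complex_of_real A)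
     (map_mat complex_of_real B) (map_mat complex_of_real C1) (map_mat complex_of_real D1)"
    unfolding saddle_mat_def dr C1_def[symmetric] D1_def[symmetric]
    using A B c by (rule map_four_block_mat)
  have c': "map_mat complex_of_real A \<in> carrier_mat m m" "map_mat complex_of_real B \<in> carrier_mat m n"
     "map_mat complex_of_real C1 \<in> carrier_mat n m" "map_mat complex_of_real D1 \<in> carrier_mat n n"
    using c A B by auto
  show "i < m \<Longrightarrow> (map_mat complex_of_real (saddle_mat A B) *\<^sub>v (p @\<^sub>v q)) $ i =
      (\<Sum>j<m. complex_of_real (A $$ (i,j)) * p $ j) + (\<Sum>k<n. complex_of_real (B $$ (i,k)) * q $ k)"
    unfolding P using fb_idx(1)[OF c' p q] mv_idx[OF A p] mv_idx[OF B q] by simp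
  show "k < n \<Longrightarrow> (map_mat complex_of_real (saddle_mat A B) *\<^sub>v (p @\<^sub>v q)) $ (m + k) =
      - (\<Sum>i<m. complex_of_real (B $$ (i,k)) * p $ i)"
  proof -
    assume k: "k < n"
    have "(map_mat complex_of_real C1 *\<^sub>v p) $ k = (\<Sum>i<m. complex_of_real (C1 $$ (k,i)) * p $ i)"
      using mv_idx[OF c(1) p k] .
    also have "\<dots> = - (\<Sum>i<m. complex_of_real (B $$ (i,k)) * p $ i)"
      using k B by (simp add: C1_def sum_negf)
    finally have 1: "(map_mat complex_of_real C1 *\<^sub>v p) $ k = - (\<Sum>i<m. complex_of_real (B $$ (i,k)) * p $ i)" .
    have 2: "(map_mat complex_of_real D1 *\<^sub>v q) $ k = 0"
      using mv_idx[OF c(2) q k] k by (simp add: D1_def)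
    show ?thesis unfolding P fb_idx(2)[OF c' p q k] 1 2 by simp
  qed
qed


lemma cq_Re:
  fixes u :: "nat \<Rightarrow> complex"
  shows "Re (\<Sum>i<m. cnj (u i) * (\<Sum>j<m. complex_of_real (A $$ (i,j)) * u j)) =
     rq m A (\<lambda>i. Re (u i)) + rq m A (\<lambda>i. Im (u i))"
  "Im (\<Sum>i<m. cnj (u i) * (\<Sum>j<m. complex_of_real (A $$ (i,j)) * u j)) =
     (\<Sum>a<m. \<Sum>b<m. A $$ (a,b) * (Re (u a) * Im (u b) - Im (u a) * Re (u b)))"
  unfolding cq_Re_Im by simp_all

lemma cq_pos:
  fixes u :: "nat \<Rightarrow> complex"
  assumes pd: "pos_def_real m A" and nz: "\<exists>i<m. u i \<noteq> 0"
  shows "Re (\<Sum>i<m. cnj (u i) * (\<Sum>j<m. complex_of_real (A $$ (i,j)) * u j)) > 0"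
proof -
  obtain i where i: "i < m" "u i \<noteq> 0" using nz by blast
  show ?thesis
  proof (cases "Re (u i) = 0")
    case True
    then have "Im (u i) \<noteq> 0" using i complex_eq_iff by force
    then have "rq m A (\<lambda>i. Im (u i)) > 0" using i by (intro pd_fun[OF pd]) auto
    then show ?thesis unfolding cq_Re using pd_nonneg[OF pd] by (simp add: add_nonneg_pos)
  next
    case False
    then have "rq m A (\<lambda>i. Re (u i)) > 0" using i by (intro pd_fun[OF pd]) auto
    then show ?thesis unfolding cq_Re using pd_nonneg[OF pd] by (simp add: add_pos_nonneg)
  qed
qed

lemma cq_nonneg:
  fixes u :: "nat \<Rightarrow> complex"
  assumes pd: "pos_def_real m A"
  shows "Re (\<Sum>i<m. cnj (u i) * (\<Sum>j<m. complex_of_real (A $$ (i,j)) * u j)) \<ge> 0"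
  unfolding cq_Re using pd_nonneg[OF pd] by simp

lemma Re_sum_cnj_sq: "Re (\<Sum>k<n. c * (r k * cnj (r k))) = Re c * (\<Sum>k<n. (cmod (r k))^2)"
proof -
  have h: "\<And>k. Re (c * (r k * cnj (r k))) = Re c * (cmod (r k))^2"
    by (simp add: complex_mult_cnj cmod_power2)
  have "Re (\<Sum>k<n. c * (r k * cnj (r k))) = (\<Sum>k<n. Re (c * (r k * cnj (r k))))" by (simp only: Re_sum)
  also have "\<dots> = (\<Sum>k<n. Re c * (cmod (r k))^2)" by (rule sum.cong[OF refl], rule h)
  also have "\<dots> = Re c * (\<Sum>k<n. (cmod (r k))^2)" by (simp only: sum_distrib_left)
  finally show ?thesis .
qed

lemma P_inverse:
  fixes A B :: "real mat"
  assumes pd: "pos_def_real m A" and B: "B \<in> carrier_mat m n" and \<alpha>: "\<alpha> \<ge> 0" and \<beta>: "\<beta> > 0"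
  shows "\<exists>Pinv. mat_inverse (map_mat complex_of_real (P_MGSSP \<alpha> \<beta> A B)) = Some Pinv \<and>
     map_mat complex_of_real (P_MGSSP \<alpha> \<beta> A B) * Pinv = 1\<^sub>m (m+n) \<and> Pinv \<in> carrier_mat (m+n) (m+n)"
proof -
  have A: "A \<in> carrier_mat m m" using pd unfolding pos_def_real_def by auto
  define Pc where "Pc = map_mat complex_of_real (P_MGSSP \<alpha> \<beta> A B)"
  have Pc: "Pc \<in> carrier_mat (m+n) (m+n)" using A B
    by (simp add: Pc_def P_MGSSP_def)
  have "det Pc \<noteq> 0"
  proof
    assume "det Pc = 0"
    then obtain w where w: "w \<in> carrier_vec (m+n)" "w \<noteq> 0\<^sub>v (m+n)" "Pc *\<^sub>v w = 0\<^sub>v (m+n)"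
      using det_0_iff_vec_prod_zero_field[OF Pc] by blast
    define p where "p = vec_first w m"
    define q where "q = vec_last w n"
    have p: "p \<in> carrier_vec m" and q: "q \<in> carrier_vec n" by (auto simp: p_def q_def)
    have wpq: "w = p @\<^sub>v q" using w(1) by (simp add: p_def q_def)
    define r where "r = (\<lambda>k. \<Sum>i<m. complex_of_real (B $$ (i,k)) * p $ i)"
    have e1: "complex_of_real \<alpha> * p $ i + 2 * (\<Sum>j<m. complex_of_real (A $$ (i,j)) * p $ j)
      + 2 * (\<Sum>k<n. complex_of_real (B $$ (i,k)) * q $ k) = 0" if i: "i < m" for i
      using comp_P(1)[OF A B p q i, of \<alpha> \<beta>] w(3) i unfolding wpq Pc_def
      by (metis index_zero_vec(1) trans_less_add1)
    have e2: "- 2 * r k + complex_of_real \<beta> * q $ k = 0" if k: "k < n" for k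
      using comp_P(2)[OF A B p q k, of \<alpha> \<beta>] w(3) k unfolding wpq Pc_def r_def
      by (metis add_less_cancel_left index_zero_vec(1))
    have qr: "q $ k = complex_of_real (2 / \<beta>) * r k" if k: "k < n" for k
      using e2[OF k] \<beta> by (simp add: field_simps)
    define Q where "Q = (\<Sum>i<m. cnj (p $ i) * (\<Sum>j<m. complex_of_real (A $$ (i,j)) * p $ j))"
    define N where "N = (\<Sum>i<m. cnj (p $ i) * p $ i)"
    have "0 = (\<Sum>i<m. cnj (p $ i) * (complex_of_real \<alpha> * p $ i + 2 * (\<Sum>j<m. complex_of_real (A $$ (i,j)) * p $ j)
      + 2 * (\<Sum>k<n. complex_of_real (B $$ (i,k)) * q $ k)))"
      using e1 by simp
    also have "\<dots> = complex_of_real \<alpha> * N + 2 * Q + 2 * (\<Sum>i<m. cnj (p $ i) * (\<Sum>k<n. complex_of_real (B $$ (i,k)) * q $ k))"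
      unfolding N_def Q_def by (simp add: algebra_simps sum.distrib sum_distrib_left)
    also have "(\<Sum>i<m. cnj (p $ i) * (\<Sum>k<n. complex_of_real (B $$ (i,k)) * q $ k)) = (\<Sum>k<n. q $ k * cnj (r k))"
      unfolding r_def by (rule cross_sum)
    also have "\<dots> = (\<Sum>k<n. complex_of_real (2 / \<beta>) * (r k * cnj (r k)))"
      by (intro sum.cong refl) (simp add: qr)
    finally have eq: "0 = complex_of_real \<alpha> * N + 2 * Q + 2 * (\<Sum>k<n. complex_of_real (2 / \<beta>) * (r k * cnj (r k)))" .
    have ReN: "Re N \<ge> 0" unfolding N_def by (simp add: Re_sum complex_mult_cnj sum_nonneg mult.commute)
    have ReQ: "Re Q \<ge> 0" unfolding Q_def by (rule cq_nonneg[OF pd])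
    have ReR: "Re (\<Sum>k<n. complex_of_real (2 / \<beta>) * (r k * cnj (r k))) = 2 / \<beta> * (\<Sum>k<n. (cmod (r k))^2)"
      by (subst Re_sum_cnj_sq) simp
    have R0: "2 / \<beta> * (\<Sum>k<n. (cmod (r k))^2) \<ge> 0" using \<beta> by (simp add: sum_nonneg)
    have "0 = \<alpha> * Re N + 2 * Re Q + 2 * (2 / \<beta> * (\<Sum>k<n. (cmod (r k))^2))"
      using arg_cong[OF eq, of Re] ReR by simp
    then have "Re Q = 0" using ReN ReQ R0 \<alpha> by (smt (verit) mult_nonneg_nonneg)
    then have p0: "\<forall>i<m. p $ i = 0" using cq_pos[OF pd, of "\<lambda>i. p $ i"] unfolding Q_def by force
    then have "\<forall>k<n. r k = 0" unfolding r_def by simp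
    then have "\<forall>k<n. q $ k = 0" using qr by simp
    then have "w = 0\<^sub>v (m+n)" using p0 p q unfolding wpq
      by (intro eq_vecI) auto
    then show False using w(2) by simp
  qed
  then have U: "Pc \<in> Units (ring_mat TYPE(complex) (m+n) undefined)" by (rule det_non_zero_imp_unit[OF Pc])
  then obtain Pinv where "mat_inverse Pc = Some Pinv" using mat_inverse(1)[OF Pc, of undefined] U by (cases "mat_inverse Pc") auto
  then show ?thesis using mat_inverse(2)[OF Pc] unfolding Pc_def by blast
qed


lemma pD_aux: "(a::real) = p * c - 2 * r * b \<Longrightarrow> b = 2 * p * b + r * c \<Longrightarrow> p * (c^2 + 4 * b^2) = a * c + 2 * b^2"
proof -
  assume e1: "(a::real) = p * c - 2 * r * b" and e2: "b = 2 * p * b + r * c"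
  have "a * c = (p * c - 2 * r * b) * c" using arg_cong[OF e1, of "\<lambda>t. t * c"] .
  also have "\<dots> = p * c^2 - 2 * (r * b * c)" by (simp add: power2_eq_square algebra_simps)
  finally have h1: "a * c = p * c^2 - 2 * (r * b * c)" .
  have "b^2 = b * (2 * p * b + r * c)" using arg_cong[OF e2, of "\<lambda>t. b * t"] by (simp add: power2_eq_square)
  also have "\<dots> = 2 * (p * b^2) + r * b * c" by (simp add: power2_eq_square algebra_simps)
  finally have h2: "b^2 = 2 * (p * b^2) + r * b * c" .
  have "p * (c^2 + 4 * b^2) = p * c^2 + 4 * (p * b^2)" by (simp add: algebra_simps)
  then show ?thesis using h1 h2 by linarith
qed
lemma rD_aux: "(a::real) = p * c - 2 * r * b \<Longrightarrow> b = 2 * p * b + r * c \<Longrightarrow> c = \<alpha> + 2 * a \<Longrightarrow> r * (c^2 + 4 * b^2) = \<alpha> * b"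
proof -
  assume e1: "(a::real) = p * c - 2 * r * b" and e2: "b = 2 * p * b + r * c" and e3: "c = \<alpha> + 2 * a"
  have "b * c = (2 * p * b + r * c) * c" using arg_cong[OF e2, of "\<lambda>t. t * c"] .
  also have "\<dots> = 2 * (p * b * c) + r * c^2" by (simp add: power2_eq_square algebra_simps)
  finally have h3: "b * c = 2 * (p * b * c) + r * c^2" .
  have "a * b = (p * c - 2 * r * b) * b" using arg_cong[OF e1, of "\<lambda>t. t * b"] .
  also have "\<dots> = p * b * c - 2 * (r * b^2)" by (simp add: power2_eq_square algebra_simps)
  finally have h4: "a * b = p * b * c - 2 * (r * b^2)" .
  have "b * c = b * (\<alpha> + 2 * a)" using arg_cong[OF e3, of "\<lambda>t. b * t"] .
  also have "\<dots> = \<alpha> * b + 2 * (a * b)" by (simp add: algebra_simps)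
  finally have h5: "b * c = \<alpha> * b + 2 * (a * b)" .
  have "r * (c^2 + 4 * b^2) = r * c^2 + 4 * (r * b^2)" by (simp add: algebra_simps)
  then show ?thesis using h3 h4 h5 by linarith
qed

lemma final_bounds:
  fixes \<alpha> lm rH rS a b p r :: real
  assumes \<alpha>: "\<alpha> \<ge> 0" and lm: "lm > 0" "lm \<le> a" and aH: "a \<le> rH" and bS: "\<bar>b\<bar> \<le> rS"
    and e1: "a = p * (\<alpha> + 2 * a) - 2 * r * b" and e2: "b = 2 * p * b + r * (\<alpha> + 2 * a)"
  shows "lm * (\<alpha> + 2 * lm) / ((\<alpha> + 2 * rH)^2 + 4 * rS^2) \<le> p"
    "p \<le> (rH * (\<alpha> + 2 * rH) + 2 * rS^2) / (\<alpha> + 2 * lm)^2"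
    "\<bar>r\<bar> \<le> \<alpha> * rS / (\<alpha> + 2 * lm)^2"
proof -
  define c where "c = \<alpha> + 2 * a"
  define D where "D = c^2 + 4 * b^2"
  have e1': "a = p * c - 2 * r * b" using e1 c_def by simp
  have e2': "b = 2 * p * b + r * c" using e2 c_def by simp
  have cpos: "c \<ge> \<alpha> + 2 * lm" "\<alpha> + 2 * lm > 0" "c \<le> \<alpha> + 2 * rH" using lm aH \<alpha> by (auto simp: c_def)
  have c2: "c^2 \<le> D" "c^2 > 0" using cpos by (auto simp: D_def)
  have Dpos: "D > 0" using c2 by linarith
  have pD: "p * D = a * c + 2 * b^2" using pD_aux[OF e1' e2'] unfolding D_def .
  have rD: "r * D = \<alpha> * b" using rD_aux[OF e1' e2' c_def] unfolding D_def .
  have p: "p = (a * c + 2 * b^2) / D" using pD Dpos by (simp add: field_simps)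
  have r: "r = \<alpha> * b / D" using rD Dpos by (simp add: field_simps)
  have b2: "b^2 \<le> rS^2" using bS by (metis abs_ge_zero power2_abs power_mono)
  have ac: "lm * (\<alpha> + 2 * lm) \<le> a * c" using lm cpos by (intro mult_mono) auto
  have acH: "a * c \<le> rH * (\<alpha> + 2 * rH)" using lm cpos aH by (intro mult_mono) auto
  have cc: "(\<alpha> + 2 * lm)^2 \<le> c^2" "c^2 \<le> (\<alpha> + 2 * rH)^2"
    using cpos by (auto intro: power_mono)
  have DY: "D \<le> (\<alpha> + 2 * rH)^2 + 4 * rS^2" using cc b2 unfolding D_def by simp
  have "lm * (\<alpha> + 2 * lm) / ((\<alpha> + 2 * rH)^2 + 4 * rS^2) \<le> a * c / D"
    using ac Dpos DY lm cpos by (intro frac_le) auto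
  also have "\<dots> \<le> p" unfolding p using Dpos by (intro divide_right_mono) auto
  finally show "lm * (\<alpha> + 2 * lm) / ((\<alpha> + 2 * rH)^2 + 4 * rS^2) \<le> p" .
  have num: "0 \<le> a * c + 2 * b^2" using lm cpos by simp
  have "p \<le> (a * c + 2 * b^2) / c^2" unfolding p using num c2 Dpos by (intro divide_left_mono) auto
  also have "\<dots> \<le> (rH * (\<alpha> + 2 * rH) + 2 * rS^2) / (\<alpha> + 2 * lm)^2"
    using num acH b2 cc cpos by (intro frac_le) auto
  finally show "p \<le> (rH * (\<alpha> + 2 * rH) + 2 * rS^2) / (\<alpha> + 2 * lm)^2" .
  have "\<bar>r\<bar> = \<alpha> * \<bar>b\<bar> / D" unfolding r using \<alpha> Dpos by (simp add: abs_mult)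
  also have "\<dots> \<le> \<alpha> * \<bar>b\<bar> / c^2" using \<alpha> c2 Dpos by (intro divide_left_mono) auto
  also have "\<dots> \<le> \<alpha> * rS / (\<alpha> + 2 * lm)^2"
    using \<alpha> bS cc cpos by (intro frac_le mult_left_mono) auto
  finally show "\<bar>r\<bar> \<le> \<alpha> * rS / (\<alpha> + 2 * lm)^2" .
qed


lemma mtv_idx:
  assumes "B \<in> carrier_mat m n" "u \<in> carrier_vec m" "k < n"
  shows "(transpose_mat (map_mat complex_of_real B) *\<^sub>v u) $ k = (\<Sum>i<m. complex_of_real (B $$ (i,k)) * u $ i)"
  using assms by (auto simp: mult_mat_vec_def scalar_prod_def atLeast0LessThan mult.commute intro!: sum.cong)

theorem theorem5p1:
  fixes m n :: nat and A B :: "real mat" and \<alpha> \<beta> :: real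
    and lam :: complex and u v :: "complex vec"
  assumes "n \<le> m"
    and "pos_def_real m A"
    and "B \<in> carrier_mat m n"
    and "\<alpha> \<ge> 0" and "\<beta> > 0"
    and "u \<in> carrier_vec m" and "v \<in> carrier_vec n"
    and "eigenvector
           (the (mat_inverse (map_mat complex_of_real (P_MGSSP \<alpha> \<beta> A B)))
              * map_mat complex_of_real (saddle_mat A B))
           (u @\<^sub>v v) lam"
  shows "(vec_space.rank m B = n \<and> transpose_mat (map_mat complex_of_real B) *\<^sub>v u = 0\<^sub>v n
            \<longrightarrow> eig_bounds A \<alpha> lam)
       \<and> (vec_space.rank m B < n \<and> u = 0\<^sub>v m \<longrightarrow> lam = 0)
       \<and> (vec_space.rank m B < n \<and> transpose_mat (map_mat complex_of_real B) *\<^sub>v u = 0\<^sub>v n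
            \<longrightarrow> lam = 0 \<or> eig_bounds A \<alpha> lam)"
proof -
  note pd = assms(2) and B = assms(3) and \<alpha> = assms(4) and \<beta> = assms(5) and u = assms(6) and v = assms(7)
  have A: "A \<in> carrier_mat m m" using pd unfolding pos_def_real_def by auto
  define Pc where "Pc = map_mat complex_of_real (P_MGSSP \<alpha> \<beta> A B)"
  define Mc where "Mc = map_mat complex_of_real (saddle_mat A B)"
  obtain Pinv where Pinv: "mat_inverse Pc = Some Pinv" "Pc * Pinv = 1\<^sub>m (m+n)" "Pinv \<in> carrier_mat (m+n) (m+n)"
    using P_inverse[OF pd B \<alpha> \<beta>] unfolding Pc_def by blast
  have Pc: "Pc \<in> carrier_mat (m+n) (m+n)" using A B by (simp add: Pc_def P_MGSSP_def)
  have Mc: "Mc \<in> carrier_mat (m+n) (m+n)" using A B by (simp add: Mc_def saddle_mat_def)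
  define x where "x = u @\<^sub>v v"
  have x: "x \<in> carrier_vec (m+n)" using u v by (simp add: x_def)
  have ev: "eigenvector (Pinv * Mc) x lam" using assms(8) Pinv(1) unfolding Pc_def Mc_def x_def by simp
  then have x0: "x \<noteq> 0\<^sub>v (m+n)" and evx: "(Pinv * Mc) *\<^sub>v x = lam \<cdot>\<^sub>v x"
    using Pinv(3) unfolding eigenvector_def by auto
  have eq: "Mc *\<^sub>v x = lam \<cdot>\<^sub>v (Pc *\<^sub>v x)"
  proof -
    have "Mc *\<^sub>v x = (Pc * Pinv) *\<^sub>v (Mc *\<^sub>v x)" using Pinv(2) Mc x by simp
    also have "\<dots> = Pc *\<^sub>v ((Pinv * Mc) *\<^sub>v x)" using Pc Pinv(3) Mc x by simp
    also have "\<dots> = lam \<cdot>\<^sub>v (Pc *\<^sub>v x)" unfolding evx using Pc x by (rule mult_mat_vec)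
    finally show ?thesis .
  qed
  have C1: "(\<Sum>j<m. complex_of_real (A $$ (i,j)) * u $ j) + (\<Sum>k<n. complex_of_real (B $$ (i,k)) * v $ k)
     = lam * (complex_of_real \<alpha> * u $ i + 2 * (\<Sum>j<m. complex_of_real (A $$ (i,j)) * u $ j)
      + 2 * (\<Sum>k<n. complex_of_real (B $$ (i,k)) * v $ k))" if i: "i < m" for i
  proof -
    have "(Mc *\<^sub>v x) $ i = lam * (Pc *\<^sub>v x) $ i" using eq i Pc by (simp add: arg_cong[OF eq, of "\<lambda>w. w $ i"])
    then show ?thesis unfolding Mc_def Pc_def x_def comp_M(1)[OF A B u v i] comp_P(1)[OF A B u v i] .
  qed
  have C2: "- (\<Sum>i<m. complex_of_real (B $$ (i,k)) * u $ i)
     = lam * (- 2 * (\<Sum>i<m. complex_of_real (B $$ (i,k)) * u $ i) + complex_of_real \<beta> * v $ k)" if k: "k < n" for k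
  proof -
    have "(Mc *\<^sub>v x) $ (m+k) = lam * (Pc *\<^sub>v x) $ (m+k)" using eq k Pc by (simp add: arg_cong[OF eq, of "\<lambda>w. w $ (m+k)"])
    then show ?thesis unfolding Mc_def Pc_def x_def comp_M(2)[OF A B u v k] comp_P(2)[OF A B u v k] .
  qed
  have xnz: "(\<exists>i<m. u $ i \<noteq> 0) \<or> (\<exists>k<n. v $ k \<noteq> 0)"
  proof (rule ccontr)
    assume "\<not> ?thesis"
    then have "x = 0\<^sub>v (m+n)" using u v unfolding x_def by (intro eq_vecI) auto
    then show False using x0 by simp
  qed
  have BTu_iff: "transpose_mat (map_mat complex_of_real B) *\<^sub>v u = 0\<^sub>v n \<Longrightarrow> \<forall>k<n. (\<Sum>i<m. complex_of_real (B $$ (i,k)) * u $ i) = 0"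
    using mtv_idx[OF B u] by (metis index_zero_vec(1))
  have part2: "lam = 0" if u0: "u = 0\<^sub>v m"
  proof -
    obtain k where k: "k < n" "v $ k \<noteq> 0" using xnz u0 by auto
    have "0 = lam * (complex_of_real \<beta> * v $ k)" using C2[OF k(1)] u0 by simp
    then show ?thesis using k \<beta> by simp
  qed
  have vzero: "v = 0\<^sub>v n" if bt: "\<forall>k<n. (\<Sum>i<m. complex_of_real (B $$ (i,k)) * u $ i) = 0" and l: "lam \<noteq> 0"
  proof (rule eq_vecI)
    fix k assume "k < dim_vec (0\<^sub>v n :: complex vec)"
    then have k: "k < n" by simp
    have "0 = lam * (complex_of_real \<beta> * v $ k)" using C2[OF k] bt k by simp
    then show "v $ k = 0\<^sub>v n $ k" using k l \<beta> by simp
  qed (use v in simp)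
  have bounds: "eig_bounds A \<alpha> lam" if v0: "v = 0\<^sub>v n"
  proof -
    obtain i0 where i0: "i0 < m" "u $ i0 \<noteq> 0" using xnz v0 by auto
    have m0: "m > 0" using i0 by simp
    define xr where "xr = (\<lambda>i. Re (u $ i))"
    define yi where "yi = (\<lambda>i. Im (u $ i))"
    define q where "q = (\<Sum>i<m. cnj (u $ i) * (\<Sum>j<m. complex_of_real (A $$ (i,j)) * u $ j))"
    define Nr where "Nr = (\<Sum>i<m. (xr i)^2) + (\<Sum>i<m. (yi i)^2)"
    have Nr_cm: "Nr = (\<Sum>i<m. (cmod (u $ i))^2)"
      unfolding Nr_def xr_def yi_def by (simp add: cmod_power2 sum.distrib)
    have Nr0: "Nr > 0" unfolding Nr_cm using i0 by (intro sum_pos2[of _ i0]) auto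
    have NN: "(\<Sum>i<m. cnj (u $ i) * u $ i) = complex_of_real Nr"
    proof -
      have "(\<Sum>i<m. cnj (u $ i) * u $ i) = (\<Sum>i<m. complex_of_real ((cmod (u $ i))^2))"
        by (intro sum.cong refl) (simp add: complex_mult_cnj cmod_power2 mult.commute)
      then show ?thesis unfolding Nr_cm by simp
    qed
    have C1': "(\<Sum>j<m. complex_of_real (A $$ (i,j)) * u $ j) =
        lam * (complex_of_real \<alpha> * u $ i + 2 * (\<Sum>j<m. complex_of_real (A $$ (i,j)) * u $ j))" if i: "i < m" for i
      using C1[OF i] v0 by simp
    have "q = (\<Sum>i<m. cnj (u $ i) * (lam * (complex_of_real \<alpha> * u $ i + 2 * (\<Sum>j<m. complex_of_real (A $$ (i,j)) * u $ j))))"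
      unfolding q_def
    proof (rule sum.cong[OF refl])
      fix i assume "i \<in> {..<m}"
      then have "i < m" by simp
      from C1'[OF this] show "cnj (u $ i) * (\<Sum>j<m. complex_of_real (A $$ (i,j)) * u $ j) =
        cnj (u $ i) * (lam * (complex_of_real \<alpha> * u $ i + 2 * (\<Sum>j<m. complex_of_real (A $$ (i,j)) * u $ j)))"
        by (rule arg_cong)
    qed
    also have "\<dots> = (\<Sum>i<m. lam * (complex_of_real \<alpha> * (cnj (u $ i) * u $ i)) + lam * (2 * (cnj (u $ i) * (\<Sum>j<m. complex_of_real (A $$ (i,j)) * u $ j))))"
      by (rule sum.cong[OF refl]) (simp add: algebra_simps)
    also have "\<dots> = lam * (complex_of_real \<alpha> * (\<Sum>i<m. cnj (u $ i) * u $ i) + 2 * q)"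
      unfolding q_def by (simp only: sum.distrib sum_distrib_left[symmetric] distrib_left)
    finally have qeq: "q = lam * (complex_of_real (\<alpha> * Nr) + 2 * q)" unfolding NN by simp
    have Req: "Re q = rq m A xr + rq m A yi" unfolding q_def xr_def yi_def by (rule cq_Re(1))
    have Imq: "Im q = (\<Sum>a<m. \<Sum>b<m. A $$ (a,b) * (xr a * yi b - yi a * xr b))"
      unfolding q_def xr_def yi_def by (rule cq_Re(2))
    define lm where "lm = lambda_min (sym_part A)"
    define rH where "rH = rho (sym_part A)"
    define rS where "rS = rho (skew_part A)"
    have lm0: "lm > 0" unfolding lm_def by (rule lm_props(1)[OF pd m0])
    have lo: "lm * Nr \<le> Re q"
      using lm_props(2)[OF pd m0, of xr] lm_props(2)[OF pd m0, of yi] unfolding Req Nr_def lm_def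
      by (simp add: distrib_left)
    have hi: "Re q \<le> rH * Nr"
      using lm_props(3)[OF pd m0, of xr] lm_props(3)[OF pd m0, of yi] unfolding Req Nr_def rH_def
      by (simp add: distrib_left)
    have im: "\<bar>Im q\<bar> \<le> rS * Nr"
      using skew_bound[OF A m0, of xr yi] unfolding Imq Nr_def rS_def .
    define a where "a = Re q / Nr"
    define b where "b = Im q / Nr"
    have ReE: "Re q = Re lam * (\<alpha> * Nr + 2 * Re q) - Im lam * (2 * Im q)"
      using arg_cong[OF qeq, of Re] by simp
    have ImE: "Im q = Re lam * (2 * Im q) + Im lam * (\<alpha> * Nr + 2 * Re q)"
      using arg_cong[OF qeq, of Im] by simp
    have qa: "Re q = Nr * a" and qb: "Im q = Nr * b" using Nr0 by (auto simp: a_def b_def)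
    have e1: "a = Re lam * (\<alpha> + 2 * a) - 2 * Im lam * b"
    proof -
      have "Nr * a = Nr * (Re lam * (\<alpha> + 2 * a) - 2 * Im lam * b)"
        using ReE unfolding qa qb by (simp add: algebra_simps)
      then show ?thesis using Nr0 by simp
    qed
    have e2: "b = 2 * Re lam * b + Im lam * (\<alpha> + 2 * a)"
    proof -
      have "Nr * b = Nr * (2 * Re lam * b + Im lam * (\<alpha> + 2 * a))"
        using ImE unfolding qa qb by (simp add: algebra_simps)
      then show ?thesis using Nr0 by simp
    qed
    have la: "lm \<le> a" using lo Nr0 unfolding qa by (simp add: mult.commute)
    have ah: "a \<le> rH" using hi Nr0 unfolding qa by (simp add: mult.commute)
    have bs: "\<bar>b\<bar> \<le> rS" using im Nr0 unfolding qb by (simp add: abs_mult mult.commute)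
    note fb = final_bounds[OF \<alpha> lm0 la ah bs e1 e2]
    show ?thesis unfolding eig_bounds_def Let_def lm_def[symmetric] rH_def[symmetric] rS_def[symmetric]
      using fb by blast
  qed
  have lam0: "vec_space.rank m B \<noteq> n" if bt: "\<forall>k<n. (\<Sum>i<m. complex_of_real (B $$ (i,k)) * u $ i) = 0" and l: "lam = 0"
  proof
    assume r: "vec_space.rank m B = n"
    define q where "q = (\<Sum>i<m. cnj (u $ i) * (\<Sum>j<m. complex_of_real (A $$ (i,j)) * u $ j))"
    have C1': "(\<Sum>j<m. complex_of_real (A $$ (i,j)) * u $ j) + (\<Sum>k<n. complex_of_real (B $$ (i,k)) * v $ k) = 0"
      if i: "i < m" for i using C1[OF i] l by simp
    have "0 = (\<Sum>i<m. cnj (u $ i) * ((\<Sum>j<m. complex_of_real (A $$ (i,j)) * u $ j) + (\<Sum>k<n. complex_of_real (B $$ (i,k)) * v $ k)))"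
      using C1' by simp
    also have "\<dots> = q + (\<Sum>i<m. cnj (u $ i) * (\<Sum>k<n. complex_of_real (B $$ (i,k)) * v $ k))"
      unfolding q_def by (simp add: distrib_left sum.distrib)
    also have "(\<Sum>i<m. cnj (u $ i) * (\<Sum>k<n. complex_of_real (B $$ (i,k)) * v $ k)) = (\<Sum>k<n. v $ k * cnj (\<Sum>i<m. complex_of_real (B $$ (i,k)) * u $ i))"
      by (rule cross_sum)
    also have "\<dots> = 0" using bt by simp
    finally have q0: "q = 0" by simp
    have u0: "\<forall>i<m. u $ i = 0"
    proof (rule ccontr)
      assume "\<not> (\<forall>i<m. u $ i = 0)"
      then have "Re q > 0" unfolding q_def by (intro cq_pos[OF pd]) auto
      then show False using q0 by simp
    qed
    have Bv: "(\<Sum>k<n. complex_of_real (B $$ (i,k)) * v $ k) = 0" if i: "i < m" for i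
      using C1'[OF i] u0 by simp
    obtain k0 where k0: "k0 < n" "v $ k0 \<noteq> 0" using xnz u0 by auto
    define wr where "wr = vec n (\<lambda>k. Re (v $ k))"
    define wi where "wi = vec n (\<lambda>k. Im (v $ k))"
    have Bw: "B *\<^sub>v wr = 0\<^sub>v m" "B *\<^sub>v wi = 0\<^sub>v m"
    proof -
      have idx: "(B *\<^sub>v vec n f) $ i = (\<Sum>k<n. B $$ (i,k) * f k)" if i: "i < m" for i f
        using B i by (auto simp: mult_mat_vec_def scalar_prod_def atLeast0LessThan intro!: sum.cong)
      have r1: "(\<Sum>k<n. B $$ (i,k) * Re (v $ k)) = 0" if i: "i < m" for i
      proof -
        have "(\<Sum>k<n. B $$ (i,k) * Re (v $ k)) = Re (\<Sum>k<n. complex_of_real (B $$ (i,k)) * v $ k)"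
          by (simp add: Re_sum)
        then show ?thesis using Bv[OF i] by simp
      qed
      have r2: "(\<Sum>k<n. B $$ (i,k) * Im (v $ k)) = 0" if i: "i < m" for i
      proof -
        have "(\<Sum>k<n. B $$ (i,k) * Im (v $ k)) = Im (\<Sum>k<n. complex_of_real (B $$ (i,k)) * v $ k)"
          by (simp add: Im_sum)
        then show ?thesis using Bv[OF i] by simp
      qed
      show "B *\<^sub>v wr = 0\<^sub>v m"
        by (rule eq_vecI) (use B idx r1 in \<open>auto simp: wr_def\<close>)
      show "B *\<^sub>v wi = 0\<^sub>v m"
        by (rule eq_vecI) (use B idx r2 in \<open>auto simp: wi_def\<close>)
    qed
    have "wr = 0\<^sub>v n" "wi = 0\<^sub>v n"
      using rank_full_kernel[OF B r _ Bw(1)] rank_full_kernel[OF B r _ Bw(2)] by (auto simp: wr_def wi_def)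
    then have "Re (v $ k0) = 0" "Im (v $ k0) = 0" using k0
      unfolding wr_def wi_def by (metis index_vec index_zero_vec(1))+
    then show False using k0 complex_eq_iff by force
  qed
  have rle: "vec_space.rank m B \<le> n" using vec_space.rank_le_nc[OF B] .
  show ?thesis
  proof (intro conjI impI)
    assume h: "vec_space.rank m B = n \<and> transpose_mat (map_mat complex_of_real B) *\<^sub>v u = 0\<^sub>v n"
    then have bt: "\<forall>k<n. (\<Sum>i<m. complex_of_real (B $$ (i,k)) * u $ i) = 0" using BTu_iff by blast
    have "lam \<noteq> 0" using lam0[OF bt] h by blast
    then show "eig_bounds A \<alpha> lam" using bounds vzero[OF bt] by blast
  next
    assume "vec_space.rank m B < n \<and> u = 0\<^sub>v m"
    then show "lam = 0" using part2 by blast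
  next
    assume h: "vec_space.rank m B < n \<and> transpose_mat (map_mat complex_of_real B) *\<^sub>v u = 0\<^sub>v n"
    then have bt: "\<forall>k<n. (\<Sum>i<m. complex_of_real (B $$ (i,k)) * u $ i) = 0" using BTu_iff by blast
    show "lam = 0 \<or> eig_bounds A \<alpha> lam" using bounds vzero[OF bt] by blast
  qed
qed

end
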